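(* Let $\delta>0$, $q=\frac rs\in[0,1)\cap\mathbb{Q}$, and $f(x)=\log(\{x-q\})$. Let $\alpha=[0;a_1,a_2,\dots]$ be irrational, let $K\in\mathbb{N}$ with $q_{K-1}\equiv0\pmod s$, and let $N\in\mathbb{N}$ with $q_{K-1}<N<q_K$ whose Ostrowski digit $b_{K-1}=b_{K-1}(N)$ satisfies $\delta a_K<b_{K-1}<\frac{a_K}{4}$. Then, if $a_K$ is sufficiently large, $$(-1)^KS_{b_{K-1}q_{K-1}}(f,\alpha)\gg\delta\,a_K\log(q_{K-1}),$$ with an absolute implied constant.
   Context: $\{x\}$ is the fractional part; $q_0=1,q_1=a_1,q_{k+1}=a_{k+1}q_k+q_{k-1}$. $S_M(f,\alpha):=\sum_{n=1}^M f(n\alpha)-M\int_0^1f(x)\,dx$. The Ostrowski expansion of $N$ is the unique representation $N=\sum_{\ell=0}^{K-1}b_\ell q_\ell$ with $b_{K-1}\ne0$, $0\le b_0<a_1$, $0\le b_\ell\le a_{\ell+1}$, and $b_{\ell-1}=0$ whenever $b_\ell=a_{\ell+1}$. *)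

theory Defs
  imports "HOL-Analysis.Analysis"
begin

fun cf_rem :: "real \<Rightarrow> nat \<Rightarrow> real" where
  "cf_rem x 0 = x"
| "cf_rem x (Suc k) = 1 / frac (cf_rem x k)"

definition cf_a :: "real \<Rightarrow> nat \<Rightarrow> nat" where
  "cf_a x k = nat \<lfloor>cf_rem x k\<rfloor>"

fun cf_q :: "real \<Rightarrow> nat \<Rightarrow> nat" where
  "cf_q x 0 = 1"
| "cf_q x (Suc 0) = cf_a x 1"
| "cf_q x (Suc (Suc k)) = cf_a x (Suc (Suc k)) * cf_q x (Suc k) + cf_q x k"

definition is_ostrowski :: "real \<Rightarrow> nat \<Rightarrow> (nat \<Rightarrow> nat) \<Rightarrow> nat \<Rightarrow> bool" where
  "is_ostrowski x K b N \<longleftrightarrow>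
     1 \<le> K \<and> N = (\<Sum>l<K. b l * cf_q x l) \<and> b (K - 1) \<noteq> 0 \<and>
     b 0 < cf_a x 1 \<and> (\<forall>l<K. b l \<le> cf_a x (Suc l)) \<and>
     (\<forall>l. 1 \<le> l \<and> l < K \<and> b l = cf_a x (Suc l) \<longrightarrow> b (l - 1) = 0)"

definition S_sum :: "nat \<Rightarrow> (real \<Rightarrow> real) \<Rightarrow> real \<Rightarrow> real" where
  "S_sum M f \<alpha> = (\<Sum>n=1..M. f (real n * \<alpha>)) - real M * integral {0..1} f"

end

theory Submission
  imports Defs "HOL-Real_Asymp.Real_Asymp"
begin


fun qq :: "real \<Rightarrow> nat \<Rightarrow> nat" where
  "qq x 0 = 0"
| "qq x (Suc 0) = 1"
| "qq x (Suc (Suc k)) = cf_a x (Suc k) * qq x (Suc k) + qq x k"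

fun pp :: "real \<Rightarrow> nat \<Rightarrow> nat" where
  "pp x 0 = 1"
| "pp x (Suc 0) = 0"
| "pp x (Suc (Suc k)) = cf_a x (Suc k) * pp x (Suc k) + pp x k"

lemma cf_q_qq: "cf_q x k = qq x (Suc k)"
  by (induction x k rule: cf_q.induct) auto

lemma Rats_inverse_iff: "(1 / (y::real)) \<in> \<rat> \<longleftrightarrow> y \<in> \<rat>"
  by (metis Rats_inverse inverse_eq_divide inverse_inverse_eq)

lemma cf_rem_irrat:
  assumes "x \<notin> \<rat>" shows "cf_rem x k \<notin> \<rat>"
proof (induction k)
  case 0 then show ?case using assms by simp
next
  case (Suc k)
  have "frac (cf_rem x k) \<notin> \<rat>"
  proof
    assume "frac (cf_rem x k) \<in> \<rat>"
    hence "frac (cf_rem x k) + of_int \<lfloor>cf_rem x k\<rfloor> \<in> \<rat>" by (simp add: Rats_add)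
    thus False using Suc by (simp add: frac_def)
  qed
  thus ?case by (simp add: Rats_inverse_iff)
qed

lemma cf_rem_gt1:
  assumes "x \<notin> \<rat>" shows "cf_rem x (Suc k) > 1"
proof -
  have "cf_rem x k \<notin> \<int>" using cf_rem_irrat[OF assms] Ints_subset_Rats by blast
  hence "frac (cf_rem x k) > 0" "frac (cf_rem x k) < 1" by (auto simp: frac_lt_1)
  thus ?thesis by simp
qed

lemma cf_a_le:
  assumes "x \<notin> \<rat>" shows "real (cf_a x (Suc k)) \<le> cf_rem x (Suc k)"
    "real (cf_a x (Suc k)) \<ge> 1"
proof -
  have g: "cf_rem x (Suc k) > 1" by (rule cf_rem_gt1[OF assms])
  hence "\<lfloor>cf_rem x (Suc k)\<rfloor> \<ge> 1" by (simp add: one_le_floor)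
  thus "real (cf_a x (Suc k)) \<le> cf_rem x (Suc k)" "real (cf_a x (Suc k)) \<ge> 1"
    unfolding cf_a_def by (auto simp: of_nat_nat)
qed

lemma cf_rem_step:
  assumes "x \<notin> \<rat>" shows "cf_rem x (Suc k) = real (cf_a x (Suc k)) + 1 / cf_rem x (Suc (Suc k))"
proof -
  have g: "cf_rem x (Suc k) > 1" by (rule cf_rem_gt1[OF assms])
  hence "\<lfloor>cf_rem x (Suc k)\<rfloor> \<ge> 1" by (simp add: one_le_floor)
  hence "real (cf_a x (Suc k)) = of_int \<lfloor>cf_rem x (Suc k)\<rfloor>" unfolding cf_a_def by simp
  moreover have "1 / cf_rem x (Suc (Suc k)) = frac (cf_rem x (Suc k))" by simp
  ultimately show ?thesis by (simp add: frac_def)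
qed

lemma qq_pos: assumes "x \<notin> \<rat>" shows "qq x (Suc k) \<ge> 1"
proof (induction k rule: nat_less_induct)
  case (1 n)
  show ?case
  proof (cases n)
    case (Suc m)
    then have "qq x (Suc m) \<ge> 1" using 1 by auto
    moreover have "cf_a x (Suc m) \<ge> 1" using cf_a_le(2)[OF assms, of m] by simp
    ultimately have "cf_a x (Suc m) * qq x (Suc m) \<ge> 1" by (simp add: one_le_mult_iff)
    hence "cf_a x (Suc m) * qq x (Suc m) + qq x m \<ge> 1" by linarith
    thus ?thesis using Suc by simp
  qed simp
qed

lemma cf_identity:
  assumes "x \<notin> \<rat>" "0 < x" "x < 1"
  shows "x * (real (qq x (Suc k)) * cf_rem x (Suc k) + real (qq x k))
         = real (pp x (Suc k)) * cf_rem x (Suc k) + real (pp x k)"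
proof (induction k)
  case 0
  have "cf_rem x 1 = 1 / x" using assms by (simp add: frac_eq)
  then show ?case using assms by simp
next
  case (Suc k)
  define r where "r = cf_rem x (Suc (Suc k))"
  have rpos: "r > 0" using cf_rem_gt1[OF assms(1)] r_def by (meson less_trans zero_less_one)
  have st: "cf_rem x (Suc k) = real (cf_a x (Suc k)) + 1 / r"
    using cf_rem_step[OF assms(1)] r_def by simp
  have E: "x * (real (qq x (Suc k)) * (real (cf_a x (Suc k)) + 1 / r) + real (qq x k))
      = real (pp x (Suc k)) * (real (cf_a x (Suc k)) + 1 / r) + real (pp x k)"
    using Suc.IH[unfolded st] by simp
  have L: "x * ((real (cf_a x (Suc k)) * real (qq x (Suc k)) + real (qq x k)) * r + real (qq x (Suc k)))
     = r * (x * (real (qq x (Suc k)) * (real (cf_a x (Suc k)) + 1 / r) + real (qq x k)))"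
    using rpos by (simp add: field_simps)
  have R: "(real (cf_a x (Suc k)) * real (pp x (Suc k)) + real (pp x k)) * r + real (pp x (Suc k))
     = r * (real (pp x (Suc k)) * (real (cf_a x (Suc k)) + 1 / r) + real (pp x k))"
    using rpos by (simp add: field_simps)
  have "x * ((real (cf_a x (Suc k)) * real (qq x (Suc k)) + real (qq x k)) * r + real (qq x (Suc k)))
      = (real (cf_a x (Suc k)) * real (pp x (Suc k)) + real (pp x k)) * r + real (pp x (Suc k))"
    unfolding L R E ..
  thus ?case by (simp add: r_def)
qed

lemma cf_det:
  "int (pp x (Suc k)) * int (qq x k) - int (pp x k) * int (qq x (Suc k)) = (-1) ^ Suc k"
proof (induction k)
  case 0 then show ?case by simp
next
  case (Suc k)
  then show ?case by (simp add: algebra_simps)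
qed

lemma cf_approx:
  assumes "x \<notin> \<rat>" "0 < x" "x < 1" "K = Suc k"
  shows "\<exists>P::nat. coprime (int P) (int (cf_q x (K - 1))) \<and> cf_q x (K - 1) \<ge> 1 \<and>
     (-1) ^ k * (x - real P / real (cf_q x (K - 1))) > 0 \<and>
     \<bar>x - real P / real (cf_q x (K - 1))\<bar> \<le> 1 / (real (cf_q x (K - 1)) ^ 2 * real (cf_a x K))"
proof -
  define Q where "Q = qq x (Suc k)"
  define Q0 where "Q0 = qq x k"
  define P where "P = pp x (Suc k)"
  define P0 where "P0 = pp x k"
  define r where "r = cf_rem x (Suc k)"
  define a where "a = cf_a x (Suc k)"
  have cq: "cf_q x (K - 1) = Q" using assms(4) by (simp add: cf_q_qq Q_def)
  have Q1: "Q \<ge> 1" using qq_pos[OF assms(1)] Q_def by simp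
  have ar: "real a \<le> r" "real a \<ge> 1" using cf_a_le[OF assms(1), of k] by (auto simp: a_def r_def)
  have id: "x * (real Q * r + real Q0) = real P * r + real P0"
    using cf_identity[OF assms(1-3), of k] by (simp add: Q_def Q0_def P_def P0_def r_def)
  have det: "int P * int Q0 - int P0 * int Q = (-1) ^ Suc k"
    using cf_det[of x k] by (simp add: Q_def Q0_def P_def P0_def)
  hence detr: "real P * real Q0 - real P0 * real Q = (-1) ^ Suc k"
  proof -
    have "real_of_int (int P * int Q0 - int P0 * int Q) = real_of_int ((-1) ^ Suc k)" using det by simp
    thus ?thesis by simp
  qed
  define D where "D = real Q * r + real Q0"
  have "real Q * real a \<le> real Q * r" using ar by (simp add: mult_left_mono)
  hence Dpos: "D \<ge> real Q * real a" unfolding D_def by simp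
  have Qa: "real Q * real a \<ge> 1" using Q1 ar(2) mult_mono[of 1 "real Q" 1 "real a"] by simp
  have Dp: "D > 0" using Dpos Qa by linarith
  have th: "(x - real P / real Q) * (real Q * D) = (-1) ^ k"
  proof -
    have "(x - real P / real Q) * (real Q * D) = real Q * (x * D) - real P * D"
      using Q1 by (simp add: field_simps)
    also have "\<dots> = real Q * (real P * r + real P0) - real P * (real Q * r + real Q0)"
      using id D_def by simp
    also have "\<dots> = - (real P * real Q0 - real P0 * real Q)" by (simp add: algebra_simps)
    also have "\<dots> = (-1) ^ k" using detr by simp
    finally show ?thesis .
  qed
  have QD: "real Q * D > 0" using Q1 Dp by simp
  hence thv: "x - real P / real Q = (-1) ^ k / (real Q * D)" using th by (subst eq_divide_eq) auto
  have pos: "(-1) ^ k * (x - real P / real Q) = 1 / (real Q * D)"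
    unfolding thv by (simp add: power_mult_distrib[symmetric] flip: power_add)
  have abs: "\<bar>x - real P / real Q\<bar> = 1 / (real Q * D)"
    unfolding thv using QD Dp by (simp add: abs_mult)
  have "real Q * D \<ge> real Q ^ 2 * real a" using Dpos Q1
    by (simp add: power2_eq_square mult.assoc mult_left_mono)
  hence le: "1 / (real Q * D) \<le> 1 / (real Q ^ 2 * real a)"
  proof (rule divide_left_mono)
    have "real Q ^ 2 * real a > 0" using Q1 ar by simp
    thus "0 < real Q * D * (real Q ^ 2 * real a)" using QD by simp
  qed (use \<open>real Q * D \<ge> real Q ^ 2 * real a\<close> in auto)
  have cop: "coprime (int P) (int Q)"
  proof (rule coprimeI)
    fix c assume "c dvd int P" "c dvd int Q"
    hence "c dvd int P * int Q0 - int P0 * int Q" by simp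
    hence "c dvd (-1) ^ Suc k" using det by simp
    moreover have "is_unit ((-1::int) ^ Suc k)" by simp
    ultimately show "is_unit c" using dvd_unit_imp_unit by blast
  qed
  show ?thesis
    apply (rule exI[of _ P])
    using cop Q1 pos abs le QD cq assms(4) by (simp add: a_def)
qed



definition GG :: "real \<Rightarrow> real" where "GG y = y * ln y - y"

lemma GG_cont: "continuous_on {0..} GG"
proof -
  have "\<forall>x\<in>{0..}. continuous (at x within {0..}) GG"
  proof
    fix x :: real assume x: "x \<in> {0..}"
    show "continuous (at x within {0..}) GG"
    proof (cases "x = 0")
      case True
      have "((\<lambda>y::real. y * ln y - y) \<longlongrightarrow> 0) (at_right 0)" by real_asymp
      hence "(GG \<longlongrightarrow> GG 0) (at 0 within {0..})"
        by (simp add: GG_def[abs_def] at_within_Ici_at_right)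
      thus ?thesis using True by (simp add: continuous_within)
    next
      case False
      hence "x > 0" using x by simp
      hence "isCont GG x" unfolding GG_def by (intro continuous_intros) auto
      thus ?thesis by (simp add: continuous_at_imp_continuous_within)
    qed
  qed
  thus ?thesis using continuous_on_eq_continuous_within by blast
qed

lemma GG_deriv: "y > 0 \<Longrightarrow> (GG has_real_derivative ln y) (at y)"
  unfolding GG_def by (auto intro!: derivative_eq_intros)

lemma ln_frac_integral:
  fixes c :: real
  assumes "0 \<le> c" "c < 1"
  shows "integral {0..1} (\<lambda>x. ln (frac (x - c))) = -1"
proof -
  let ?f = "\<lambda>x. ln (frac (x - c))"
  have i1: "(?f has_integral (GG (1 - c) - GG 0)) {c..1}"
  proof -
    have "(?f has_integral ((\<lambda>x. GG (x - c)) 1 - (\<lambda>x. GG (x - c)) c)) {c..1}"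
    proof (rule fundamental_theorem_of_calculus_interior)
      show "continuous_on {c..1} (\<lambda>x. GG (x - c))"
        by (rule continuous_on_compose2[OF GG_cont]) (auto intro!: continuous_intros)
      fix x assume x: "x \<in> {c<..<1}"
      have fr: "frac (x - c) = x - c" using x assms by (simp add: frac_eq)
      have "((\<lambda>x. GG (x - c)) has_real_derivative ln (x - c) * 1) (at x)"
        using x by (intro DERIV_chain2[OF GG_deriv]) (auto intro!: derivative_eq_intros)
      thus "((\<lambda>x. GG (x - c)) has_vector_derivative ?f x) (at x)"
        using fr by (simp add: has_real_derivative_iff_has_vector_derivative)
    qed (use assms in auto)
    thus ?thesis by simp
  qed
  have i2: "(?f has_integral (GG 1 - GG (1 - c))) {0..c}"
  proof -
    have "(?f has_integral ((\<lambda>x. GG (x - c + 1)) c - (\<lambda>x. GG (x - c + 1)) 0)) {0..c}"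
    proof (rule fundamental_theorem_of_calculus_interior)
      show "continuous_on {0..c} (\<lambda>x. GG (x - c + 1))"
        by (rule continuous_on_compose2[OF GG_cont]) (use assms in \<open>auto intro!: continuous_intros\<close>)
      fix x assume x: "x \<in> {0<..<c}"
      have "frac (x - c + 1) = x - c + 1" using x assms by (simp add: frac_eq)
      hence fr: "frac (x - c) = x - c + 1" by (simp add: frac_1_eq)
      have "((\<lambda>x. GG (x - c + 1)) has_real_derivative ln (x - c + 1) * 1) (at x)"
        using x assms by (intro DERIV_chain2[OF GG_deriv]) (auto intro!: derivative_eq_intros)
      thus "((\<lambda>x. GG (x - c + 1)) has_vector_derivative ?f x) (at x)"
        using fr by (simp add: has_real_derivative_iff_has_vector_derivative)
    qed (use assms in auto)
    thus ?thesis by simp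
  qed
  have "(?f has_integral ((GG 1 - GG (1 - c)) + (GG (1 - c) - GG 0))) {0..1}"
    by (rule has_integral_combine[OF _ _ i2 i1]) (use assms in auto)
  hence "(?f has_integral -1) {0..1}" by (simp add: GG_def)
  thus ?thesis by (rule integral_unique)
qed



lemma ln_step_ge: "real Q \<ge> 1 \<Longrightarrow> ln (real Q + 1) - ln (real Q) \<ge> 2 / (2 * real Q + 1)"
  using ln_inverse_approx_ge[of "real Q" "real Q + 1"] by simp

lemma ln_step_le: "real Q \<ge> 1 \<Longrightarrow> ln (real Q + 1) - ln (real Q) \<le> (1 / real Q + 1 / (real Q + 1)) / 2"
  using ln_inverse_approx_le[of "real Q" 1] by (simp add: inverse_eq_divide)

lemma harm_bound: "Q \<ge> 1 \<Longrightarrow> (\<Sum>k=1..<Suc Q. 1 / real k) \<le> 1 + ln (real Q)"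
proof (induction Q rule: dec_induct)
  case base then show ?case by simp
next
  case (step Q)
  have "(\<Sum>k=1..<Suc (Suc Q). 1 / real k) = (\<Sum>k=1..<Suc Q. 1 / real k) + 1 / (real Q + 1)"
    by (simp add: sum.atLeastLessThan_Suc)
  also have "\<dots> \<le> 1 + ln (real Q) + 1 / (real Q + 1)" using step by simp
  also have "\<dots> \<le> 1 + ln (real Q + 1)"
  proof -
    have q: "real Q \<ge> 1" using step by simp
    have "1 / (real Q + 1) \<le> 2 / (2 * real Q + 1)" using q by (simp add: field_simps)
    thus ?thesis using ln_step_ge[OF q] by simp
  qed
  finally show ?case by (simp add: add.commute)
qed

lemma harm_bound': "Q \<ge> 1 \<Longrightarrow> (\<Sum>k=1..<Q. 1 / real k) \<le> 1 + ln (real Q)"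
proof -
  assume q: "Q \<ge> 1"
  have "(\<Sum>k=1..<Q. 1 / real k) \<le> (\<Sum>k=1..<Suc Q. 1 / real k)"
    using q by (simp add: sum.atLeastLessThan_Suc)
  thus ?thesis using harm_bound[OF q] by simp
qed

definition dd :: "nat \<Rightarrow> real" where
  "dd Q = (\<Sum>k=1..<Q. ln (real k)) - (real Q - 1/2) * ln (real Q) + real Q"

lemma dd_bounds: "Q \<ge> 1 \<Longrightarrow> 3/4 + 1 / (4 * real Q) \<le> dd Q \<and> dd Q \<le> 1"
proof (induction Q rule: dec_induct)
  case base then show ?case by (simp add: dd_def)
next
  case (step Q)
  have q: "real Q \<ge> 1" using step by simp
  have step_eq: "dd (Suc Q) = dd Q + 1 - (real Q + 1/2) * (ln (real Q + 1) - ln (real Q))"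
    using q by (simp add: dd_def sum.atLeastLessThan_Suc algebra_simps)
  have A: "(real Q + 1/2) * (ln (real Q + 1) - ln (real Q)) \<ge> 1"
  proof -
    have "(real Q + 1/2) * (2 / (2 * real Q + 1)) = 1" using q by (simp add: field_simps)
    moreover have "(real Q + 1/2) * (ln (real Q + 1) - ln (real Q)) \<ge> (real Q + 1/2) * (2 / (2 * real Q + 1))"
      using ln_step_ge[OF q] q by (intro mult_left_mono) auto
    ultimately show ?thesis by linarith
  qed
  have B: "(real Q + 1/2) * (ln (real Q + 1) - ln (real Q)) \<le> 1 + (1 / (4 * real Q) - 1 / (4 * (real Q + 1)))"
  proof -
    have "(real Q + 1/2) * ((1 / real Q + 1 / (real Q + 1)) / 2) = 1 + (1 / (4 * real Q) - 1 / (4 * (real Q + 1)))"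
      using q by (simp add: field_simps) (simp add: add_divide_distrib add_nonneg_eq_0_iff)
    moreover have "(real Q + 1/2) * (ln (real Q + 1) - ln (real Q)) \<le> (real Q + 1/2) * ((1 / real Q + 1 / (real Q + 1)) / 2)"
      using ln_step_le[OF q] q by (intro mult_left_mono) auto
    ultimately show ?thesis by linarith
  qed
  have e: "1 / (4 * real (Suc Q)) = 1 / (4 * (real Q + 1))" by simp
  show ?case unfolding e using step.IH A B step_eq by linarith
qed

definition LQ :: "nat \<Rightarrow> real" where
  "LQ Q = (\<Sum>k=1..<Q. ln (real k / real Q)) + real Q"

lemma LQ_dd: "Q \<ge> 1 \<Longrightarrow> LQ Q = dd Q + ln (real Q) / 2"
proof -
  assume q: "Q \<ge> 1"
  have "(\<Sum>k=1..<Q. ln (real k / real Q)) = (\<Sum>k=1..<Q. ln (real k) - ln (real Q))"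
    using q by (intro sum.cong) (auto simp: ln_div)
  also have "\<dots> = (\<Sum>k=1..<Q. ln (real k)) - (real Q - 1) * ln (real Q)"
    using q by (simp add: sum_subtractf of_nat_diff)
  finally show ?thesis unfolding LQ_def dd_def by (simp add: algebra_simps)
qed

lemma LQ_bounds: "Q \<ge> 1 \<Longrightarrow> ln (real Q) / 2 + 3/4 \<le> LQ Q \<and> LQ Q \<le> ln (real Q) / 2 + 1"
proof -
  assume q: "Q \<ge> 1"
  have "1 / (4 * real Q) \<ge> 0" by simp
  thus ?thesis using dd_bounds[OF q] LQ_dd[OF q] by linarith
qed



lemma sum_blocks:
  fixes g :: "nat \<Rightarrow> real"
  shows "(\<Sum>n=1..b*Q. g n) = (\<Sum>m<b. \<Sum>j=1..Q. g (m*Q + j))"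
proof (induction b)
  case 0 then show ?case by simp
next
  case (Suc b)
  have split: "{1..Suc b * Q} = {1..b*Q} \<union> {b*Q+1..b*Q+Q}" by auto
  have "(\<Sum>n=1..Suc b*Q. g n) = (\<Sum>n=1..b*Q. g n) + (\<Sum>n=b*Q+1..b*Q+Q. g n)"
    unfolding split by (rule sum.union_disjoint) auto
  also have "(\<Sum>n=b*Q+1..b*Q+Q. g n) = (\<Sum>j=1..Q. g (b*Q + j))"
  proof -
    have "(\<Sum>n=1+b*Q..Q+b*Q. g n) = (\<Sum>j=1..Q. g (j + b*Q))" by (rule sum.shift_bounds_cl_nat_ivl)
    thus ?thesis by (simp add: add.commute)
  qed
  finally show ?case using Suc by simp
qed

lemma kf_bij:
  assumes "Q \<ge> 1" "coprime (int P) (int Q)"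
  shows "bij_betw (\<lambda>j. nat ((int j * int P - t) mod int Q)) {1..Q} {0..<Q}"
proof -
  let ?h = "\<lambda>j. nat ((int j * int P - t) mod int Q)"
  have inj: "inj_on ?h {1..Q}"
  proof (rule inj_onI)
    fix i j assume i: "i \<in> {1..Q}" and j: "j \<in> {1..Q}" and e: "?h i = ?h j"
    have "(int i * int P - t) mod int Q = (int j * int P - t) mod int Q"
      using e assms(1) by (simp add: nat_eq_iff)
    hence "int Q dvd (int i * int P - t) - (int j * int P - t)"
      by (simp add: mod_eq_dvd_iff)
    hence "int Q dvd (int i - int j) * int P" by (simp add: algebra_simps)
    hence d: "int Q dvd (int i - int j)"
      using coprime_dvd_mult_left_iff[of "int Q" "int P" "int i - int j"] assms(2)
      by (simp add: coprime_commute)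
    have "\<bar>int i - int j\<bar> < int Q" using i j by auto
    show "i = j"
    proof (rule ccontr)
      assume "i \<noteq> j"
      hence "int i - int j \<noteq> 0" by simp
      from dvd_imp_le_int[OF this d] have "\<bar>int Q\<bar> \<le> \<bar>int i - int j\<bar>" .
      thus False using \<open>\<bar>int i - int j\<bar> < int Q\<close> by simp
    qed
  qed
  have sub: "?h ` {1..Q} \<subseteq> {0..<Q}"
  proof
    fix y assume "y \<in> ?h ` {1..Q}"
    then obtain j where "y = ?h j" by auto
    moreover have "(int j * int P - t) mod int Q < int Q" using assms(1) by simp
    ultimately show "y \<in> {0..<Q}" using assms(1) by (simp add: nat_less_iff)
  qed
  have "card (?h ` {1..Q}) = card {0..<Q}" using card_image[OF inj] by simp
  hence "?h ` {1..Q} = {0..<Q}" using sub by (intro card_subset_eq) auto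
  thus ?thesis using inj by (simp add: bij_betw_def)
qed

lemma frac_shift:
  fixes \<theta> :: real
  assumes "Q \<ge> 1"
  shows "frac (real (m*Q+j) * (real P / real Q + \<theta>) - real t / real Q)
       = frac (real_of_int ((int j * int P - int t) mod int Q) / real Q + real (m*Q+j) * \<theta>)"
proof -
  define n where "n = m*Q + j"
  define A where "A = int n * int P - int t"
  have Am: "A mod int Q = (int j * int P - int t) mod int Q"
  proof -
    have "A = (int j * int P - int t) + (int m * int P) * int Q" unfolding A_def n_def by (simp add: algebra_simps)
    thus ?thesis by simp
  qed
  have Adec: "A = int Q * (A div int Q) + A mod int Q" by simp
  have "real n * (real P / real Q + \<theta>) - real t / real Q = real_of_int A / real Q + real n * \<theta>"
    using assms unfolding A_def by (simp add: field_simps)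
  also have "real_of_int A / real Q = real_of_int (A div int Q) + real_of_int (A mod int Q) / real Q"
  proof -
    have "real_of_int A = real Q * real_of_int (A div int Q) + real_of_int (A mod int Q)"
    proof -
      have "real_of_int A = real_of_int (int Q * (A div int Q) + A mod int Q)" using Adec by simp
      thus ?thesis by (simp only: of_int_add of_int_mult of_int_of_nat_eq)
    qed
    thus ?thesis using assms by (simp add: field_simps)
  qed
  finally have "real n * (real P / real Q + \<theta>) - real t / real Q
      = real_of_int (A div int Q) + (real_of_int (A mod int Q) / real Q + real n * \<theta>)" by simp
  thus ?thesis unfolding Am n_def by simp
qed

lemma ln_one_minus_ge: "0 \<le> y \<Longrightarrow> y \<le> 1/2 \<Longrightarrow> ln (1 - y) \<ge> -2 * (y::real)"
proof -
  assume y: "0 \<le> y" "y \<le> 1/2"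
  have "ln (1 / (1 - y)) \<le> 1 / (1 - y) - 1" using y by (intro ln_le_minus_one) auto
  hence "- ln (1 - y) \<le> y / (1 - y)" using y by (simp add: ln_div field_simps)
  moreover have "y / (1 - y) \<le> 2 * y"
  proof -
    have "y * (y * 2) \<le> y * 1" using y by (intro mult_left_mono) auto
    thus ?thesis using y by (simp add: field_simps)
  qed
  ultimately show ?thesis by linarith
qed



definition Hs :: "nat \<Rightarrow> real" where "Hs Q = (\<Sum>k=1..<Q. 1 / real k)"

lemma term_odd:
  fixes x w :: real
  assumes "k < Q" "Q \<ge> 1" "0 < x" "x \<le> w" "w * real Q < 1"
  shows "ln (frac (real k / real Q + x)) \<le> (if k = 0 then ln w else ln (real k / real Q) + w * real Q / real k)"
proof (cases "k = 0")
  case True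
  have "w < 1" using assms(2,5) by (smt (verit) mult_le_cancel_left1 of_nat_1 of_nat_mono)
  hence "frac x = x" using assms by (simp add: frac_eq)
  thus ?thesis using True assms by simp
next
  case False
  have Qp: "real Q > 0" using assms by simp
  have "real k \<le> real Q - 1" using assms(1) by linarith
  hence "real k / real Q \<le> 1 - 1 / real Q" using Qp by (simp add: field_simps)
  moreover have "w < 1 / real Q" using assms(5) Qp by (simp add: field_simps)
  ultimately have lt: "real k / real Q + x < 1" using assms(4) by linarith
  have kp: "real k / real Q > 0" using False Qp by simp
  hence fr: "frac (real k / real Q + x) = real k / real Q + x" using lt assms(3) by (simp add: frac_eq)
  have "ln (real k / real Q + x) \<le> ln (real k / real Q + w)" using kp assms by simp
  also have "real k / real Q + w = (real k / real Q) * (1 + w * real Q / real k)"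
    using False Qp by (simp add: field_simps)
  also have "ln \<dots> = ln (real k / real Q) + ln (1 + w * real Q / real k)"
  proof (rule ln_mult_pos)
    have "w * real Q / real k \<ge> 0" using assms(3,4) Qp by simp
    thus "0 < 1 + w * real Q / real k" by linarith
  qed (use kp in auto)
  also have "ln (1 + w * real Q / real k) \<le> w * real Q / real k"
    using assms(3,4) Qp by (intro ln_add_one_self_le_self) auto
  finally show ?thesis using fr False by simp
qed

lemma term_even:
  fixes x w :: real
  assumes "k < Q" "Q \<ge> 1" "x < 0" "-w \<le> x" "4 * w * real Q \<le> 1"
  shows "ln (frac (real k / real Q + x)) \<ge> (if k = 0 then -2 * w else ln (real k / real Q) - 2 * (w * real Q / real k))"
proof -
  have Qp: "real Q \<ge> 1" using assms by simp
  have w0: "w > 0" using assms by simp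
  have w4: "w * real Q \<le> 1/4" using assms(5) by simp
  have wle: "w \<le> 1/4"
  proof -
    have "w * 1 \<le> w * real Q" using w0 Qp by (intro mult_left_mono) auto
    thus ?thesis using w4 by simp
  qed
  show ?thesis
  proof (cases "k = 0")
    case True
    have "frac (x + 1) = x + 1" using assms wle by (simp add: frac_eq)
    hence fr: "frac x = 1 + x" by (metis frac_1_eq add.commute)
    have "ln (1 - w) \<le> ln (1 + x)" using assms wle by simp
    moreover have "ln (1 - w) \<ge> -2 * w" using wle w0 by (intro ln_one_minus_ge) auto
    ultimately show ?thesis using True fr by simp
  next
    case False
    have Qp': "real Q > 0" using Qp by simp
    have kp: "real k \<ge> 1" using False by simp
    have y: "w * real Q / real k \<le> 1/4"
    proof -
      have "w * real Q / real k \<le> w * real Q / 1" using kp w0 Qp' by (intro divide_left_mono) auto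
      thus ?thesis using w4 by linarith
    qed
    have "real k \<le> real Q - 1" using assms(1) by linarith
    hence "real k / real Q \<le> 1 - 1 / real Q" using Qp' by (simp add: field_simps)
    moreover have "1 / real Q > 0" using Qp' by simp
    ultimately have lt: "real k / real Q + x < 1" using assms(3) by linarith
    have eq: "real k / real Q - w = (real k / real Q) * (1 - w * real Q / real k)"
      using kp Qp' by (simp add: field_simps)
    have pos: "real k / real Q - w > 0"
      unfolding eq using y kp Qp' by (intro mult_pos_pos) auto
    hence fr: "frac (real k / real Q + x) = real k / real Q + x" using lt assms(4) by (simp add: frac_eq)
    have "ln (real k / real Q - w) \<le> ln (real k / real Q + x)" using pos assms(4) by simp
    moreover have "ln (real k / real Q - w) = ln (real k / real Q) + ln (1 - w * real Q / real k)"
      unfolding eq using y kp Qp' by (intro ln_mult_pos) auto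
    moreover have "ln (1 - w * real Q / real k) \<ge> -2 * (w * real Q / real k)"
      using y w0 kp Qp' by (intro ln_one_minus_ge) auto
    ultimately show ?thesis using fr False by simp
  qed
qed

lemma block_reindex:
  fixes h :: "nat \<Rightarrow> real"
  assumes "Q \<ge> 1" "coprime (int P) (int Q)"
  shows "(\<Sum>j=1..Q. h (nat ((int j * int P - t) mod int Q))) = h 0 + (\<Sum>k=1..<Q. h k)"
proof -
  have "(\<Sum>j=1..Q. h (nat ((int j * int P - t) mod int Q))) = (\<Sum>k=0..<Q. h k)"
    by (rule sum.reindex_bij_betw[OF kf_bij[OF assms]])
  also have "\<dots> = h 0 + (\<Sum>k=1..<Q. h k)" using assms(1) by (simp add: sum.atLeast_Suc_lessThan)
  finally show ?thesis .
qed



lemma gauss_real: "(\<Sum>m<b. real (m + 1)) = real b * (real b + 1) / 2"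
  by (induction b) (auto simp: field_simps)

lemma term_rewrite:
  fixes \<theta> :: real
  assumes "Q \<ge> 1"
  shows "ln (frac (real (m*Q+j) * (real P / real Q + \<theta>) - real t / real Q))
       = ln (frac (real (nat ((int j * int P - int t) mod int Q)) / real Q + real (m*Q+j) * \<theta>))"
proof -
  have "(int j * int P - int t) mod int Q \<ge> 0" using assms by simp
  hence "real (nat ((int j * int P - int t) mod int Q)) = real_of_int ((int j * int P - int t) mod int Q)"
    by simp
  thus ?thesis using frac_shift[OF assms, of m j P \<theta> t] by simp
qed

lemma x_bound:
  fixes \<theta> a :: real
  assumes "Q \<ge> 1" "j \<in> {1..Q}" "\<bar>\<theta>\<bar> \<le> 1 / (real Q ^ 2 * a)" "a > 0"
  shows "\<bar>real (m*Q+j) * \<theta>\<bar> \<le> real (m + 1) / (a * real Q)"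
proof -
  have Qp: "real Q > 0" using assms by simp
  have n: "real (m*Q+j) \<le> real (m+1) * real Q" using assms(2) by (simp add: algebra_simps)
  have "\<bar>real (m*Q+j) * \<theta>\<bar> = real (m*Q+j) * \<bar>\<theta>\<bar>" by (simp add: abs_mult)
  also have "\<dots> \<le> (real (m+1) * real Q) * (1 / (real Q ^ 2 * a))"
    using n assms(3) by (intro mult_mono) auto
  also have "\<dots> = real (m + 1) / (a * real Q)" using Qp assms(4) by (simp add: power2_eq_square field_simps)
  finally show ?thesis .
qed

lemma ln4: "ln (4::real) \<ge> 5/4"
proof -
  have "ln (4::real) = 2 * ln 2" using ln_realpow[of 2 2] by simp
  thus ?thesis using ln2_ge_two_thirds by simp
qed

lemma main_odd:
  fixes \<theta> a :: real
  assumes Q1: "Q \<ge> 1" and cop: "coprime (int P) (int Q)" and th: "\<theta> > 0" "\<theta> \<le> 1 / (real Q ^ 2 * a)"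
    and a8: "a \<ge> 8" and b: "real b < a / 4"
  shows "(\<Sum>n=1..b*Q. ln (frac (real n * (real P / real Q + \<theta>) - real t / real Q))) + real (b*Q)
         \<le> - (1/4) * real b * ln (real Q)"
proof -
  let ?g = "\<lambda>n. ln (frac (real n * (real P / real Q + \<theta>) - real t / real Q))"
  let ?kf = "\<lambda>j. nat ((int j * int P - int t) mod int Q)"
  have Qp: "real Q > 0" using Q1 by simp
  have lnQ: "ln (real Q) \<ge> 0" using Q1 by simp
  have HS: "Hs Q \<le> 1 + ln (real Q)" unfolding Hs_def by (rule harm_bound'[OF Q1])
  have HS0: "Hs Q \<ge> 0" unfolding Hs_def by (intro sum_nonneg) auto
  have LQb: "LQ Q \<le> ln (real Q) / 2 + 1" using LQ_bounds[OF Q1] by simp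
  have LQs: "(\<Sum>k=1..<Q. ln (real k / real Q)) = LQ Q - real Q" unfolding LQ_def by simp
  have blk: "(\<Sum>j=1..Q. ?g (m*Q + j)) + real Q \<le> - (1/4) * ln (real Q)" if m: "m < b" for m
  proof -
    define w where "w = real (m + 1) / (a * real Q)"
    have wQ: "w * real Q = real (m+1) / a" unfolding w_def using Qp by simp
    have mb: "real (m+1) \<le> real b" using m by simp
    have ma: "real (m+1) / a < 1/4" using mb b a8 by (simp add: field_simps)
    have wpos: "w > 0" unfolding w_def using a8 Qp by simp
    have wQ1: "w * real Q < 1" using wQ ma by linarith
    define h where "h = (\<lambda>k. if k = 0 then ln w else ln (real k / real Q) + w * real Q / real k)"
    have "(\<Sum>j=1..Q. ?g (m*Q + j)) \<le> (\<Sum>j=1..Q. h (?kf j))"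
    proof (rule sum_mono)
      fix j assume j: "j \<in> {1..Q}"
      have xb: "\<bar>real (m*Q+j) * \<theta>\<bar> \<le> w" unfolding w_def
        using x_bound[OF Q1 j, of \<theta> a m] th a8 by simp
      have "m*Q+j > 0" using j by simp
      hence "real (m*Q+j) > 0" by (simp only: of_nat_0_less_iff)
      hence xp: "real (m*Q+j) * \<theta> > 0" using th by (intro mult_pos_pos) auto
      have kQ: "?kf j < Q" using Q1 by (simp add: nat_less_iff)
      show "?g (m*Q + j) \<le> h (?kf j)"
        unfolding term_rewrite[OF Q1] h_def
        by (rule term_odd[OF kQ Q1 xp _ wQ1]) (use xb xp in auto)
    qed
    also have "\<dots> = h 0 + (\<Sum>k=1..<Q. h k)" by (rule block_reindex[OF Q1 cop])
    also have "(\<Sum>k=1..<Q. h k) = (\<Sum>k=1..<Q. ln (real k / real Q)) + w * real Q * Hs Q"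
      unfolding h_def Hs_def by (simp add: sum.distrib sum_distrib_left)
    finally have s1: "(\<Sum>j=1..Q. ?g (m*Q + j)) + real Q \<le> ln w + LQ Q + w * real Q * Hs Q"
      unfolding LQs h_def by simp
    have lnw: "ln w \<le> - ln 4 - ln (real Q)"
    proof -
      have "w = (real (m+1) / a) / real Q" unfolding w_def by simp
      hence "ln w = ln (real (m+1) / a) - ln (real Q)" using Qp a8 by (simp add: ln_div ln_mult_pos)
      moreover have "ln (real (m+1) / a) \<le> ln (1/4)" using ma a8 by simp
      moreover have "ln (1/4::real) = - ln 4" by (simp add: ln_div)
      ultimately show ?thesis by linarith
    qed
    have "w * real Q * Hs Q \<le> (1/4) * (1 + ln (real Q))"
      using wQ ma HS HS0 wpos Qp by (intro mult_mono) auto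
    hence "w * real Q * Hs Q \<le> 1/4 + ln (real Q) / 4" by simp
    thus ?thesis using s1 lnw LQb ln4 by linarith
  qed
  have "(\<Sum>n=1..b*Q. ?g n) + real (b*Q) = (\<Sum>m<b. (\<Sum>j=1..Q. ?g (m*Q + j)) + real Q)"
    using sum_blocks[of ?g b Q] by (simp only: sum.distrib) simp
  also have "\<dots> \<le> (\<Sum>m<b. - (1/4) * ln (real Q))" by (rule sum_mono) (use blk in auto)
  also have "\<dots> = - (1/4) * real b * ln (real Q)" by simp
  finally show ?thesis .
qed

lemma main_even:
  fixes \<theta> a :: real
  assumes Q1: "Q \<ge> 1" and cop: "coprime (int P) (int Q)" and th: "\<theta> < 0" "\<bar>\<theta>\<bar> \<le> 1 / (real Q ^ 2 * a)"
    and a8: "a \<ge> 8" and b: "real b < a / 4"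
  shows "(\<Sum>n=1..b*Q. ln (frac (real n * (real P / real Q + \<theta>) - real t / real Q))) + real (b*Q)
         \<ge> (1/8) * real b * ln (real Q)"
proof -
  let ?g = "\<lambda>n. ln (frac (real n * (real P / real Q + \<theta>) - real t / real Q))"
  let ?kf = "\<lambda>j. nat ((int j * int P - int t) mod int Q)"
  have Qp: "real Q > 0" using Q1 by simp
  have Qge: "real Q \<ge> 1" using Q1 by simp
  have lnQ: "ln (real Q) \<ge> 0" using Q1 by simp
  have HS: "Hs Q \<le> 1 + ln (real Q)" unfolding Hs_def by (rule harm_bound'[OF Q1])
  have HS0: "Hs Q \<ge> 0" unfolding Hs_def by (intro sum_nonneg) auto
  have LQb: "LQ Q \<ge> ln (real Q) / 2 + 3/4" using LQ_bounds[OF Q1] by simp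
  have LQs: "(\<Sum>k=1..<Q. ln (real k / real Q)) = LQ Q - real Q" unfolding LQ_def by simp
  have blk: "(\<Sum>j=1..Q. ?g (m*Q + j)) + real Q \<ge> LQ Q - 2 * (real (m+1) / a) * (1 + Hs Q)" if m: "m < b" for m
  proof -
    define w where "w = real (m + 1) / (a * real Q)"
    have wQ: "w * real Q = real (m+1) / a" unfolding w_def using Qp by simp
    have mb: "real (m+1) \<le> real b" using m by simp
    have ma: "real (m+1) / a < 1/4" using mb b a8 by (simp add: field_simps)
    have wpos: "w > 0" unfolding w_def using a8 Qp by simp
    have "4 * (w * real Q) \<le> 1" using wQ ma by linarith
    hence wQ1: "4 * w * real Q \<le> 1" by (simp add: mult.assoc)
    define h where "h = (\<lambda>k. if k = 0 then -2 * w else ln (real k / real Q) - 2 * (w * real Q / real k))"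
    have "(\<Sum>j=1..Q. h (?kf j)) \<le> (\<Sum>j=1..Q. ?g (m*Q + j))"
    proof (rule sum_mono)
      fix j assume j: "j \<in> {1..Q}"
      have xb: "\<bar>real (m*Q+j) * \<theta>\<bar> \<le> w" unfolding w_def
        using x_bound[OF Q1 j, of \<theta> a m] th a8 by simp
      have "m*Q+j > 0" using j by simp
      hence "real (m*Q+j) > 0" by (simp only: of_nat_0_less_iff)
      hence xn: "real (m*Q+j) * \<theta> < 0" using th by (intro mult_pos_neg) auto
      have kQ: "?kf j < Q" using Q1 by (simp add: nat_less_iff)
      show "h (?kf j) \<le> ?g (m*Q + j)"
        unfolding term_rewrite[OF Q1] h_def
        by (rule term_even[OF kQ Q1 xn _ wQ1]) (use xb xn in auto)
    qed
    also have "(\<Sum>j=1..Q. h (?kf j)) = h 0 + (\<Sum>k=1..<Q. h k)" by (rule block_reindex[OF Q1 cop])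
    also have "(\<Sum>k=1..<Q. h k) = (\<Sum>k=1..<Q. ln (real k / real Q)) - 2 * (w * real Q) * Hs Q"
      unfolding h_def Hs_def by (simp add: sum_subtractf sum_distrib_left)
    finally have s1: "LQ Q - 2 * w - 2 * (w * real Q) * Hs Q \<le> (\<Sum>j=1..Q. ?g (m*Q + j)) + real Q"
      unfolding LQs h_def by simp
    have "w \<le> w * real Q" using wpos Qge by (simp add: mult_le_cancel_left1)
    hence "2 * w + 2 * (w * real Q) * Hs Q \<le> 2 * (w * real Q) * (1 + Hs Q)"
      by (simp add: algebra_simps)
    thus ?thesis using s1 wQ by simp
  qed
  have "(\<Sum>m<b. LQ Q - 2 * (real (m+1) / a) * (1 + Hs Q))
        = real b * LQ Q - (2 / a) * (1 + Hs Q) * (\<Sum>m<b. real (m + 1))"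
  proof -
    have "(\<Sum>m<b. LQ Q - 2 * (real (m+1) / a) * (1 + Hs Q)) = (\<Sum>m<b. LQ Q - (2 / a) * (1 + Hs Q) * real (m+1))"
      by (intro sum.cong) (auto simp: algebra_simps)
    also have "\<dots> = real b * LQ Q - (2 / a) * (1 + Hs Q) * (\<Sum>m<b. real (m + 1))"
      by (simp only: sum_subtractf sum_distrib_left[symmetric]) simp
    finally show ?thesis .
  qed
  also have "\<dots> = real b * LQ Q - (real b * ((real b + 1) / a)) * (1 + Hs Q)"
    unfolding gauss_real using a8 by (simp add: field_simps)
  also have "\<dots> \<ge> real b * (ln (real Q) / 2 + 3/4) - (real b * (3/8)) * (2 + ln (real Q))"
  proof -
    have "(real b + 1) / a \<le> 3/8" using b a8 by (simp add: field_simps)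
    hence "real b * ((real b + 1) / a) \<le> real b * (3/8)" by (intro mult_left_mono) auto
    moreover have "1 + Hs Q \<le> 2 + ln (real Q)" using HS by simp
    moreover have "0 \<le> real b * (3/8)" by simp
    moreover have "0 \<le> 1 + Hs Q" using HS0 by simp
    ultimately have "(real b * ((real b + 1) / a)) * (1 + Hs Q) \<le> (real b * (3/8)) * (2 + ln (real Q))"
      by (rule mult_mono)
    moreover have "real b * LQ Q \<ge> real b * (ln (real Q) / 2 + 3/4)" using LQb by (intro mult_left_mono) auto
    ultimately show ?thesis by linarith
  qed
  finally have A0: "(\<Sum>m<b. LQ Q - 2 * (real (m+1) / a) * (1 + Hs Q)) \<ge> real b * (ln (real Q) / 2 + 3/4) - (real b * (3/8)) * (2 + ln (real Q))" .
  have "real b * (ln (real Q) / 2 + 3/4) - (real b * (3/8)) * (2 + ln (real Q)) = (1/8) * real b * ln (real Q)"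
    by (simp add: algebra_simps)
  hence A: "(\<Sum>m<b. LQ Q - 2 * (real (m+1) / a) * (1 + Hs Q)) \<ge> (1/8) * real b * ln (real Q)"
    using A0 by linarith
  have "(\<Sum>n=1..b*Q. ?g n) + real (b*Q) = (\<Sum>m<b. (\<Sum>j=1..Q. ?g (m*Q + j)) + real Q)"
    using sum_blocks[of ?g b Q] by (simp only: sum.distrib) simp
  also have "\<dots> \<ge> (\<Sum>m<b. LQ Q - 2 * (real (m+1) / a) * (1 + Hs Q))" by (rule sum_mono) (use blk in auto)
  finally show ?thesis using A by linarith
qed



theorem lemma4p4:
  "\<exists>C>0. \<forall>\<delta>::real. \<delta> > 0 \<longrightarrow>
     (\<forall>r s :: nat. 0 < s \<and> r < s \<and> coprime r s \<longrightarrow>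
       (\<exists>A::real. \<forall>(\<alpha>::real) (K::nat) (N::nat) (b::nat \<Rightarrow> nat).
          \<alpha> \<notin> \<rat> \<and> 0 < \<alpha> \<and> \<alpha> < 1 \<and> 1 \<le> K \<and>
          cf_q \<alpha> (K - 1) mod s = 0 \<and>
          cf_q \<alpha> (K - 1) < N \<and> N < cf_q \<alpha> K \<and>
          is_ostrowski \<alpha> K b N \<and>
          \<delta> * real (cf_a \<alpha> K) < real (b (K - 1)) \<and>
          real (b (K - 1)) < real (cf_a \<alpha> K) / 4 \<and>
          real (cf_a \<alpha> K) \<ge> A
          \<longrightarrow>
          (-1) ^ K * S_sum (b (K - 1) * cf_q \<alpha> (K - 1))
                      (\<lambda>x. ln (frac (x - real r / real s))) \<alpha>
            \<ge> C * \<delta> * real (cf_a \<alpha> K) * ln (real (cf_q \<alpha> (K - 1)))))"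
proof (rule exI[of _ "1/8"], intro conjI allI impI)
  fix \<delta> :: real and r s :: nat
  assume \<delta>: "\<delta> > 0" and rs: "0 < s \<and> r < s \<and> coprime r s"
  show "\<exists>A::real. \<forall>(\<alpha>::real) (K::nat) (N::nat) (b::nat \<Rightarrow> nat).
          \<alpha> \<notin> \<rat> \<and> 0 < \<alpha> \<and> \<alpha> < 1 \<and> 1 \<le> K \<and>
          cf_q \<alpha> (K - 1) mod s = 0 \<and>
          cf_q \<alpha> (K - 1) < N \<and> N < cf_q \<alpha> K \<and>
          is_ostrowski \<alpha> K b N \<and>
          \<delta> * real (cf_a \<alpha> K) < real (b (K - 1)) \<and>
          real (b (K - 1)) < real (cf_a \<alpha> K) / 4 \<and>
          real (cf_a \<alpha> K) \<ge> A
          \<longrightarrow>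
          (-1) ^ K * S_sum (b (K - 1) * cf_q \<alpha> (K - 1))
                      (\<lambda>x. ln (frac (x - real r / real s))) \<alpha>
            \<ge> 1/8 * \<delta> * real (cf_a \<alpha> K) * ln (real (cf_q \<alpha> (K - 1)))"
    apply (intro exI[of _ 8] allI impI)
    subgoal premises H for \<alpha> K N b
    proof -
    define Q where "Q = cf_q \<alpha> (K - 1)"
    define a where "a = real (cf_a \<alpha> K)"
    define B where "B = b (K - 1)"
    obtain k where K: "K = Suc k" using H by (cases K) auto
    obtain P where P: "coprime (int P) (int Q)" "Q \<ge> 1"
      "(-1) ^ k * (\<alpha> - real P / real Q) > 0"
      "\<bar>\<alpha> - real P / real Q\<bar> \<le> 1 / (real Q ^ 2 * a)"
      using cf_approx[of \<alpha> K k] H K unfolding Q_def a_def by blast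
    define \<theta> where "\<theta> = \<alpha> - real P / real Q"
    have \<alpha>eq: "\<alpha> = real P / real Q + \<theta>" unfolding \<theta>_def by simp
    have a8: "a \<ge> 8" using H a_def by simp
    have Bd: "\<delta> * a < real B" "real B < a / 4" using H unfolding a_def B_def by auto
    have Qp: "real Q > 0" using P by simp
    have lnQ: "ln (real Q) \<ge> 0" using P by simp
    define t where "t = r * (Q div s)"
    have "Q mod s = 0" using H Q_def by simp
    moreover have "s * (Q div s) + Q mod s = Q" by (rule mult_div_mod_eq)
    ultimately have sQ: "Q = s * (Q div s)" by simp
    have Qs: "Q div s > 0"
    proof (rule ccontr)
      assume "\<not> Q div s > 0"
      hence "Q div s = 0" by simp
      hence "Q = 0" using sQ by simp
      thus False using P(2) by simp
    qed
    have tQ: "real t / real Q = real r / real s"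
    proof -
      have "real Q = real (s * (Q div s))" using sQ by simp
      hence "real Q = real s * real (Q div s)" by (simp only: of_nat_mult)
      thus ?thesis unfolding t_def using Qs rs by (simp add: field_simps)
    qed
    have c01: "0 \<le> real r / real s" "real r / real s < 1" using rs by auto
    have S: "S_sum (B * Q) (\<lambda>x. ln (frac (x - real r / real s))) \<alpha>
       = (\<Sum>n=1..B*Q. ln (frac (real n * (real P / real Q + \<theta>) - real t / real Q))) + real (B*Q)"
      unfolding S_sum_def ln_frac_integral[OF c01] tQ \<alpha>eq by simp
    have main: "(-1) ^ K * S_sum (B * Q) (\<lambda>x. ln (frac (x - real r / real s))) \<alpha>
         \<ge> (1/8) * real B * ln (real Q)"
    proof (cases "even k")
      case True
      have th: "\<theta> > 0" using P(3) True unfolding \<theta>_def by simp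
      have th2: "\<theta> \<le> 1 / (real Q ^ 2 * a)" using P(4) unfolding \<theta>_def by simp
      have "(\<Sum>n=1..B*Q. ln (frac (real n * (real P / real Q + \<theta>) - real t / real Q))) + real (B*Q)
         \<le> - (1/4) * real B * ln (real Q)"
        by (rule main_odd[OF P(2) P(1) th th2 a8 Bd(2)])
      moreover have "(-1::real) ^ K = -1" using True K by simp
      moreover have "(1/8) * real B * ln (real Q) \<le> (1/4) * real B * ln (real Q)"
        using lnQ by (intro mult_right_mono) auto
      ultimately show ?thesis unfolding S by (simp only: mult_minus1 mult.assoc)
    next
      case False
      have th: "\<theta> < 0" using P(3) False unfolding \<theta>_def by simp
      have th2: "\<bar>\<theta>\<bar> \<le> 1 / (real Q ^ 2 * a)" using P(4) unfolding \<theta>_def by simp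
      have "(\<Sum>n=1..B*Q. ln (frac (real n * (real P / real Q + \<theta>) - real t / real Q))) + real (B*Q)
         \<ge> (1/8) * real B * ln (real Q)"
        by (rule main_even[OF P(2) P(1) th th2 a8 Bd(2)]) 
      moreover have "(-1::real) ^ K = 1" using False K by simp
      ultimately show ?thesis unfolding S by simp
    qed
    have "1/8 * \<delta> * a * ln (real Q) \<le> (1/8) * real B * ln (real Q)"
      using Bd(1) lnQ by (intro mult_right_mono) auto
    thus ?thesis
      using main unfolding Q_def a_def B_def by linarith
  qed
  done
qed simp

end
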